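(* Let $p_{kl}=(p^1_{kl},p^2_{kl})$ and $c_{kl}=(c^1_{kl},c^2_{kl})$ be two parallel nets in the plane $\mathbb{R}^2$ with the same index set. They are Christoffel dual if and only if there is a collection of real numbers $h_{kl}$ such that for any adjacent vertices $c_{kl}$ and $c_{k'l'}$, $$h_{kl}-h_{k'l'}=(c^1_{kl}-c^1_{k'l'})\,p^2_{kl}-(c^2_{kl}-c^2_{k'l'})\,p^1_{kl}.$$
   Context: Here a (planar) net is a collection of points indexed by $(k,l)$ with $0\le k\le a$, $0\le l\le b$, whose faces are the (labeled, not necessarily convex) quadrilaterals $(k,l),(k+1,l),(k+1,l+1),(k,l+1)$; vertices are adjacent if their indices differ by $1$ in exactly one coordinate, and edges join adjacent vertices. Two nets are parallel if corresponding edges are parallel. Two labeled quadrilaterals $ABCD$ and $A'B'C'D'$ are dual if $AB\parallel A'B'$, $BC\parallel B'C'$, $CD\parallel C'D'$, $DA\parallel D'A'$, $AC\parallel B'D'$, $BD\parallel A'C'$. Two nets are Christoffel dual if their corresponding faces are dual. *)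

theory Defs
  imports Main "HOL.Real"
begin

type_synonym point = "real \<times> real"

text \<open>A net indexed by (k,l), 0 <= k <= a, 0 <= l <= b, is a map nat => nat => point
  (values outside the index range are irrelevant).\<close>
type_synonym net = "nat \<Rightarrow> nat \<Rightarrow> point"

definition par :: "point \<Rightarrow> point \<Rightarrow> point \<Rightarrow> point \<Rightarrow> bool" where
  "par P Q P' Q' \<longleftrightarrow>
     (fst Q - fst P) * (snd Q' - snd P') - (snd Q - snd P) * (fst Q' - fst P') = 0"

definition dual_quad :: "point \<Rightarrow> point \<Rightarrow> point \<Rightarrow> point \<Rightarrow>
                         point \<Rightarrow> point \<Rightarrow> point \<Rightarrow> point \<Rightarrow> bool" where
  "dual_quad A B C D A' B' C' D' \<longleftrightarrow>
     par A B A' B' \<and> par B C B' C' \<and> par C D C' D' \<and> par D A D' A' \<and>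
     par A C B' D' \<and> par B D A' C'"

definition adjacent :: "nat \<Rightarrow> nat \<Rightarrow> nat \<times> nat \<Rightarrow> nat \<times> nat \<Rightarrow> bool" where
  "adjacent a b v w \<longleftrightarrow>
     fst v \<le> a \<and> snd v \<le> b \<and> fst w \<le> a \<and> snd w \<le> b \<and>
     ((snd v = snd w \<and> (fst w = fst v + 1 \<or> fst v = fst w + 1)) \<or>
      (fst v = fst w \<and> (snd w = snd v + 1 \<or> snd v = snd w + 1)))"

definition parallel_nets :: "nat \<Rightarrow> nat \<Rightarrow> net \<Rightarrow> net \<Rightarrow> bool" where
  "parallel_nets a b p c \<longleftrightarrow>
     (\<forall>v w. adjacent a b v w \<longrightarrow>
        par (p (fst v) (snd v)) (p (fst w) (snd w)) (c (fst v) (snd v)) (c (fst w) (snd w)))"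

definition christoffel_dual :: "nat \<Rightarrow> nat \<Rightarrow> net \<Rightarrow> net \<Rightarrow> bool" where
  "christoffel_dual a b p c \<longleftrightarrow>
     (\<forall>k l. k < a \<and> l < b \<longrightarrow>
        dual_quad (p k l) (p (k+1) l) (p (k+1) (l+1)) (p k (l+1))
                  (c k l) (c (k+1) l) (c (k+1) (l+1)) (c k (l+1)))"

end

theory Submission
  imports Defs
begin

definition om :: "net \<Rightarrow> net \<Rightarrow> nat \<Rightarrow> nat \<Rightarrow> nat \<Rightarrow> nat \<Rightarrow> real" where
  "om p c k l k' l' = (fst (c k l) - fst (c k' l')) * snd (p k l) - (snd (c k l) - snd (c k' l')) * fst (p k l)"

lemma antisym_om:
  assumes "parallel_nets a b p c" "adjacent a b (k, l) (k', l')"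
  shows "om p c k l k' l' = - om p c k' l' k l"
proof -
  have "par (p k l) (p k' l') (c k l) (c k' l')"
    using assms unfolding parallel_nets_def by (metis fst_conv snd_conv)
  then show ?thesis unfolding par_def om_def by algebra
qed

lemma face_id1:
  fixes A B C D a b c d :: point shows
  "(fst a - fst b) * snd A - (snd a - snd b) * fst A
 + ((fst b - fst c) * snd B - (snd b - snd c) * fst B)
 + ((fst c - fst d) * snd C - (snd c - snd d) * fst C)
 + ((fst d - fst a) * snd D - (snd d - snd a) * fst D)
 = ((fst C - fst A) * (snd d - snd b) - (snd C - snd A) * (fst d - fst b))
 - ((fst C - fst B) * (snd c - snd b) - (snd C - snd B) * (fst c - fst b))
 - ((fst A - fst D) * (snd a - snd d) - (snd A - snd D) * (fst a - fst d))"
  by (simp add: algebra_simps)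

lemma face_id2:
  fixes A B C D a b c d :: point shows
  "(fst a - fst b) * snd A - (snd a - snd b) * fst A
 + ((fst b - fst c) * snd B - (snd b - snd c) * fst B)
 + ((fst c - fst d) * snd C - (snd c - snd d) * fst C)
 + ((fst d - fst a) * snd D - (snd d - snd a) * fst D)
 = - ((fst D - fst B) * (snd c - snd a) - (snd D - snd B) * (fst c - fst a))
 - ((fst B - fst A) * (snd b - snd a) - (snd B - snd A) * (fst b - fst a))
 - ((fst D - fst C) * (snd d - snd c) - (snd D - snd C) * (fst d - fst c))"
  by (simp add: algebra_simps)

lemma face_closed:
  assumes par: "parallel_nets a b p c" and kl: "k < a" "l < b"
  shows "christoffel_dual a b p c \<Longrightarrow>
    om p c k l (k+1) l + om p c (k+1) l (k+1) (l+1) + om p c (k+1) (l+1) k (l+1) + om p c k (l+1) k l = 0"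
    and "om p c k l (k+1) l + om p c (k+1) l (k+1) (l+1) + om p c (k+1) (l+1) k (l+1) + om p c k (l+1) k l = 0
     \<Longrightarrow> dual_quad (p k l) (p (k+1) l) (p (k+1) (l+1)) (p k (l+1))
                  (c k l) (c (k+1) l) (c (k+1) (l+1)) (c k (l+1))"
proof -
  have adj: "adjacent a b (k,l) (k+1,l)" "adjacent a b (k+1,l) (k+1,l+1)"
     "adjacent a b (k+1,l+1) (k,l+1)" "adjacent a b (k,l+1) (k,l)"
    using kl unfolding adjacent_def by auto
  have E: "par (p k l) (p (k+1) l) (c k l) (c (k+1) l)"
     "par (p (k+1) l) (p (k+1) (l+1)) (c (k+1) l) (c (k+1) (l+1))"
     "par (p (k+1) (l+1)) (p k (l+1)) (c (k+1) (l+1)) (c k (l+1))"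
     "par (p k (l+1)) (p k l) (c k (l+1)) (c k l)"
    using par adj unfolding parallel_nets_def by (metis fst_conv snd_conv)+
  note F1 = face_id1[of "c k l" "c (k+1) l" "p k l" "c (k+1) (l+1)" "p (k+1) l" "c k (l+1)" "p (k+1) (l+1)" "p k (l+1)"]
  note F2 = face_id2[of "c k l" "c (k+1) l" "p k l" "c (k+1) (l+1)" "p (k+1) l" "c k (l+1)" "p (k+1) (l+1)" "p k (l+1)"]
  show "christoffel_dual a b p c \<Longrightarrow>
    om p c k l (k+1) l + om p c (k+1) l (k+1) (l+1) + om p c (k+1) (l+1) k (l+1) + om p c k (l+1) k l = 0"
  proof -
    assume "christoffel_dual a b p c"
    then have "dual_quad (p k l) (p (k+1) l) (p (k+1) (l+1)) (p k (l+1))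
                  (c k l) (c (k+1) l) (c (k+1) (l+1)) (c k (l+1))"
      using kl unfolding christoffel_dual_def by blast
    then show ?thesis using F1 E unfolding dual_quad_def par_def om_def by simp
  qed
  show "om p c k l (k+1) l + om p c (k+1) l (k+1) (l+1) + om p c (k+1) (l+1) k (l+1) + om p c k (l+1) k l = 0
     \<Longrightarrow> dual_quad (p k l) (p (k+1) l) (p (k+1) (l+1)) (p k (l+1))
                  (c k l) (c (k+1) l) (c (k+1) (l+1)) (c k (l+1))"
    using F1 F2 E unfolding dual_quad_def par_def om_def by simp
qed

theorem lemma7:
  fixes a b :: nat and p c :: net
  assumes "parallel_nets a b p c"
  shows "christoffel_dual a b p c \<longleftrightarrow>
    (\<exists>h :: nat \<Rightarrow> nat \<Rightarrow> real. \<forall>k l k' l'. adjacent a b (k, l) (k', l') \<longrightarrow>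
       h k l - h k' l' =
         (fst (c k l) - fst (c k' l')) * snd (p k l) - (snd (c k l) - snd (c k' l')) * fst (p k l))"
proof
  assume cd: "christoffel_dual a b p c"
  define h where "h k l = (\<Sum>i<k. om p c (i+1) 0 i 0) + (\<Sum>j<l. om p c k (j+1) k j)" for k l
  have vert: "h k (l+1) - h k l = om p c k (l+1) k l" for k l
    unfolding h_def by simp
  have horiz: "l \<le> b \<Longrightarrow> k < a \<Longrightarrow> h (k+1) l - h k l = om p c (k+1) l k l" for k l
  proof (induction l arbitrary: k)
    case 0
    then show ?case unfolding h_def by simp
  next
    case (Suc l)
    have IH: "h (k+1) l - h k l = om p c (k+1) l k l" using Suc by simp
    have cl: "om p c k l (k+1) l + om p c (k+1) l (k+1) (l+1) + om p c (k+1) (l+1) k (l+1) + om p c k (l+1) k l = 0"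
      using face_closed(1)[OF assms, of k l] Suc cd by simp
    have a1: "om p c (k+1) l k l = - om p c k l (k+1) l"
      by (rule antisym_om[OF assms]) (use Suc in \<open>auto simp: adjacent_def\<close>)
    have a2: "om p c (k+1) (l+1) (k+1) l = - om p c (k+1) l (k+1) (l+1)"
      by (rule antisym_om[OF assms]) (use Suc in \<open>auto simp: adjacent_def\<close>)
    have a3: "om p c (k+1) (l+1) k (l+1) = - om p c k (l+1) (k+1) (l+1)"
      by (rule antisym_om[OF assms]) (use Suc in \<open>auto simp: adjacent_def\<close>)
    have "h (k+1) (Suc l) - h k (Suc l) = (h (k+1) (l+1) - h (k+1) l) + (h (k+1) l - h k l) - (h k (l+1) - h k l)"
      by simp
    also have "\<dots> = om p c (k+1) (Suc l) k (Suc l)"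
      using vert[of "k+1" l] vert[of k l] IH cl a1 a2 by simp
    finally show ?case .
  qed
  show "\<exists>h :: nat \<Rightarrow> nat \<Rightarrow> real. \<forall>k l k' l'. adjacent a b (k, l) (k', l') \<longrightarrow>
       h k l - h k' l' =
         (fst (c k l) - fst (c k' l')) * snd (p k l) - (snd (c k l) - snd (c k' l')) * fst (p k l)"
  proof (intro exI allI impI)
    fix k l k' l'
    assume adj: "adjacent a b (k, l) (k', l')"
    have as: "om p c k l k' l' = - om p c k' l' k l" by (rule antisym_om[OF assms adj])
    have "h k l - h k' l' = om p c k l k' l'"
    proof -
      consider "l' = l" "k' = k+1" | "l' = l" "k = k'+1" | "k' = k" "l' = l+1" | "k' = k" "l = l'+1"
        using adj unfolding adjacent_def by auto
      then show ?thesis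
      proof cases
        case 1 then show ?thesis using horiz[of l k] adj as unfolding adjacent_def by auto
      next
        case 2 then show ?thesis using horiz[of l k'] adj unfolding adjacent_def by auto
      next
        case 3 then show ?thesis using vert[of k l] as by auto
      next
        case 4 then show ?thesis using vert[of k l'] by auto
      qed
    qed
    then show "h k l - h k' l' =
         (fst (c k l) - fst (c k' l')) * snd (p k l) - (snd (c k l) - snd (c k' l')) * fst (p k l)"
      unfolding om_def .
  qed
next
  assume "\<exists>h :: nat \<Rightarrow> nat \<Rightarrow> real. \<forall>k l k' l'. adjacent a b (k, l) (k', l') \<longrightarrow>
       h k l - h k' l' =
         (fst (c k l) - fst (c k' l')) * snd (p k l) - (snd (c k l) - snd (c k' l')) * fst (p k l)"
  then obtain h :: "nat \<Rightarrow> nat \<Rightarrow> real" where h: "\<And>k l k' l'. adjacent a b (k, l) (k', l') \<Longrightarrow>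
       h k l - h k' l' = om p c k l k' l'" unfolding om_def by blast
  show "christoffel_dual a b p c"
    unfolding christoffel_dual_def
  proof (intro allI impI)
    fix k l assume kl: "k < a \<and> l < b"
    have "adjacent a b (k,l) (k+1,l)" "adjacent a b (k+1,l) (k+1,l+1)"
     "adjacent a b (k+1,l+1) (k,l+1)" "adjacent a b (k,l+1) (k,l)"
      using kl unfolding adjacent_def by auto
    then have "om p c k l (k+1) l + om p c (k+1) l (k+1) (l+1) + om p c (k+1) (l+1) k (l+1) + om p c k (l+1) k l = 0"
      using h by (metis add.commute diff_add_cancel diff_add_eq add_diff_cancel_left' diff_self add_diff_eq)
    then show "dual_quad (p k l) (p (k+1) l) (p (k+1) (l+1)) (p k (l+1))
                  (c k l) (c (k+1) l) (c (k+1) (l+1)) (c k (l+1))"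
      using face_closed(2)[OF assms] kl by blast
  qed
qed

end
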